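(* For all real numbers $m>0$ and $p>0$, the Harmonic Vase $HV(m,p)\subset\mathbb{R}^3$ is compact.
   Context: Use cylindrical coordinates $(r,\varphi,z)$ on $\mathbb{R}^3$, so that a point has Cartesian coordinates $(r\cos\varphi, r\sin\varphi, z)$, with $\varphi\in[-\pi,\pi]$. For $m,p>0$, the Harmonic Vase $HV(m,p)$ is the union of two sets: (1) the pedestal $\{(x,y,0)\in\mathbb{R}^3 : x^2+y^2\le 9\}$; (2) the wall $W(m,p)=\{(r\cos\varphi, r\sin\varphi, z) : z\in(0,m],\ \varphi\in[-\pi,\pi],\ r=\tfrac{|\varphi|}{\pi}\sin\tfrac{\pi p}{z}+2\}$. *)

theory Defs
  imports "HOL-Analysis.Analysis"
begin

definition pedestal :: "(real \<times> real \<times> real) set" where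
  "pedestal = {(x, y, 0) | x y. x\<^sup>2 + y\<^sup>2 \<le> 9}"

definition vase_wall :: "real \<Rightarrow> real \<Rightarrow> (real \<times> real \<times> real) set" where
  "vase_wall m p = {(r * cos \<phi>, r * sin \<phi>, z) | r \<phi> z.
      z \<in> {0<..m} \<and> \<phi> \<in> {-pi..pi} \<and> r = \<bar>\<phi>\<bar> / pi * sin (pi * p / z) + 2}"

definition harmonic_vase :: "real \<Rightarrow> real \<Rightarrow> (real \<times> real \<times> real) set" where
  "harmonic_vase m p = pedestal \<union> vase_wall m p"

end

theory Submission
  imports Defs
begin

lemma wall_r:
  assumes "\<phi> \<in> {-pi..pi}"
  shows "\<bar>\<bar>\<phi>\<bar> / pi * sin s + 2\<bar> \<le> 3" and "\<bar>\<phi>\<bar> / pi * sin s + 2 \<ge> 0"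
proof -
  have a: "\<bar>\<phi>\<bar> / pi \<le> 1" "\<bar>\<phi>\<bar> / pi \<ge> 0" using assms pi_gt_zero by auto
  have "\<bar>\<bar>\<phi>\<bar> / pi * sin s\<bar> = \<bar>\<phi>\<bar> / pi * \<bar>sin s\<bar>" by (simp add: abs_mult)
  also have "\<dots> \<le> 1 * 1"
    by (rule mult_mono) (use a abs_sin_le_one[of s] in auto)
  finally have "\<bar>\<bar>\<phi>\<bar> / pi * sin s\<bar> \<le> 1" by simp
  then show "\<bar>\<bar>\<phi>\<bar> / pi * sin s + 2\<bar> \<le> 3" "\<bar>\<phi>\<bar> / pi * sin s + 2 \<ge> 0"
    by (auto simp del: times_divide_eq_left times_divide_eq_right)
qed

lemma sq_bound:
  fixes r \<phi> :: real
  assumes "\<bar>r\<bar> \<le> 3"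
  shows "(r * cos \<phi>)\<^sup>2 + (r * sin \<phi>)\<^sup>2 \<le> 9"
proof -
  have "(r * cos \<phi>)\<^sup>2 + (r * sin \<phi>)\<^sup>2 = r\<^sup>2"
    by (simp add: power_mult_distrib flip: distrib_left)
  also have "\<dots> \<le> 3\<^sup>2" using assms by (metis abs_le_square_iff abs_numeral)
  finally show ?thesis by simp
qed

lemma subsetA:
  "harmonic_vase m p \<subseteq> {(x, y, z). x\<^sup>2 + y\<^sup>2 \<le> 9 \<and> 0 \<le> z \<and> z \<le> max m 0}"
  unfolding harmonic_vase_def pedestal_def vase_wall_def
  using wall_r(1) sq_bound by fastforce

lemma closedA: "closed {(x::real, y::real, z). x\<^sup>2 + y\<^sup>2 \<le> 9 \<and> 0 \<le> z \<and> z \<le> max m (0::real)}"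
proof -
  have "{(x::real, y::real, z). x\<^sup>2 + y\<^sup>2 \<le> 9 \<and> 0 \<le> z \<and> z \<le> max m (0::real)} =
     {q::real\<times>real\<times>real. (fst q)\<^sup>2 + (fst (snd q))\<^sup>2 \<le> 9} \<inter> {q. 0 \<le> snd (snd q)} \<inter> {q. snd (snd q) \<le> max m 0}"
    by auto
  also have "closed \<dots>"
    by (intro closed_Int closed_Collect_le continuous_intros)
  finally show ?thesis .
qed

theorem mainTheorem2:
  fixes m p :: real
  assumes "m > 0" and "p > 0"
  shows "compact (harmonic_vase m p)"
proof -
  let ?H = "harmonic_vase m p"
  have bnd: "bounded ?H"
  proof (rule bounded_subset[OF bounded_cbox])
    show "?H \<subseteq> cbox (-3, -3, 0) (3, 3, m)"
    proof
      fix q assume "q \<in> ?H"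
      then have "q \<in> {(x, y, z). x\<^sup>2 + y\<^sup>2 \<le> 9 \<and> 0 \<le> z \<and> z \<le> max m 0}"
        using subsetA by blast
      then obtain x y z where q: "q = (x,y,z)" "x\<^sup>2 + y\<^sup>2 \<le> 9" "0 \<le> z" "z \<le> m"
        using assms by auto
      have "x\<^sup>2 \<le> 9" using q(2) zero_le_power2[of y] by linarith
      then have "x\<^sup>2 \<le> 3\<^sup>2" by simp
      then have x3: "\<bar>x\<bar> \<le> \<bar>3\<bar>" using abs_le_square_iff by blast
      have "y\<^sup>2 \<le> 9" using q(2) zero_le_power2[of x] by linarith
      then have "y\<^sup>2 \<le> 3\<^sup>2" by simp
      then have y3: "\<bar>y\<bar> \<le> \<bar>3\<bar>" using abs_le_square_iff by blast
      have "\<bar>x\<bar> \<le> 3" "\<bar>y\<bar> \<le> 3" using x3 y3 by simp_all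
      then show "q \<in> cbox (-3, -3, 0) (3, 3, m)"
        using q by (auto simp: cbox_Pair_eq)
    qed
  qed
  have "closure ?H \<subseteq> ?H"
  proof
    fix l assume l: "l \<in> closure ?H"
    obtain a b c where labc: "l = (a,b,c)" by (cases l) auto
    have lA: "l \<in> {(x, y, z). x\<^sup>2 + y\<^sup>2 \<le> 9 \<and> 0 \<le> z \<and> z \<le> max m 0}"
      using closure_minimal[OF subsetA closedA] l by blast
    show "l \<in> ?H"
    proof (cases "c = 0")
      case True
      then show ?thesis using lA labc
        unfolding harmonic_vase_def pedestal_def by auto
    next
      case False
      then have c: "c > 0" using lA labc by auto
      define g where "g = (\<lambda>w::real\<times>real. \<bar>fst w\<bar> / pi * sin (pi * p / snd w) + 2)"
      define f where "f = (\<lambda>w::real\<times>real. (g w * cos (fst w), g w * sin (fst w), snd w))"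
      define K where "K = cbox (-pi, c/2) (pi, m)"
      have cg: "continuous_on K g" unfolding g_def K_def
        using c by (intro continuous_intros) (auto simp: cbox_Pair_eq)
      have "continuous_on K f" unfolding f_def
        by (intro continuous_intros cg)
      then have cf: "compact (f ` K)"
        using compact_continuous_image compact_cbox K_def by blast
      define S where "S = {q::real\<times>real\<times>real. c/2 < snd (snd q)}"
      have oS: "open S" unfolding S_def by (intro open_Collect_less continuous_intros)
      have lS: "l \<in> S" using labc c S_def by auto
      have SH: "S \<inter> ?H \<subseteq> f ` K"
      proof
        fix q assume q: "q \<in> S \<inter> ?H"
        then have "q \<notin> pedestal" unfolding S_def pedestal_def using c by auto
        then have "q \<in> vase_wall m p" using q unfolding harmonic_vase_def by auto
        then obtain \<phi> z where h: "z \<in> {0<..m}" "\<phi> \<in> {-pi..pi}"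
          "q = ((\<bar>\<phi>\<bar> / pi * sin (pi * p / z) + 2) * cos \<phi>,
                (\<bar>\<phi>\<bar> / pi * sin (pi * p / z) + 2) * sin \<phi>, z)"
          unfolding vase_wall_def by blast
        then have "z > c/2" using q S_def by auto
        then have "(\<phi>, z) \<in> K" using h unfolding K_def by (auto simp: cbox_Pair_eq)
        moreover have "q = f (\<phi>, z)" using h unfolding f_def g_def by simp
        ultimately show "q \<in> f ` K" by blast
      qed
      have fKH: "f ` K \<subseteq> ?H"
      proof
        fix q assume "q \<in> f ` K"
        then obtain \<phi> z where "(\<phi>, z) \<in> K" "q = f (\<phi>, z)" by auto
        then show "q \<in> ?H" unfolding K_def f_def g_def harmonic_vase_def vase_wall_def
          using c by (auto simp: cbox_Pair_eq)
      qed
      have "l \<in> S \<inter> closure ?H" using l lS by blast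
      also have "\<dots> \<subseteq> closure (S \<inter> ?H)" by (rule open_Int_closure_subset[OF oS])
      also have "\<dots> \<subseteq> f ` K" using SH cf closure_minimal compact_imp_closed by blast
      finally show ?thesis using fKH by blast
    qed
  qed
  then have "closed ?H" using closure_subset_eq by blast
  then show ?thesis using bnd compact_eq_bounded_closed by blast
qed

end
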